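(* Let $k\geq 2$ and let $G$ and $G'$ be the graphs defined below. Then $Z(G)\leq 4k-2$ and $Z(G')\leq 4k-3$.
   Context: Let $k\geq 2$. Let $H$ be the graph with vertex set $\{0,1,\ldots,3k-2\}$ in which vertex $i$ is adjacent to $k+i,k+i+1,\ldots,2k+i-1$ (indices mod $3k-1$). Let $A$ be a clique with vertices $a_0,\ldots,a_k$, $B$ a coclique (independent set) with vertices $b_0,\ldots,b_k$, and $C$ a coclique with vertices $c_1,\ldots,c_{k-1}$. The graph $G$ is the disjoint union of $H,A,B,C$ together with the following edges: (i) $a_i\sim b_j$ for all $0\leq i,j\leq k$ with $i\neq j$; (ii) $c_i\sim j$ for all $1\leq i\leq k-1$ and $j\in\{0,k,k+1,\ldots,3k-2\}$; (iii) $b_i\sim j$ for all $0\leq i\leq k-1$ and $j\in\{1,\ldots,k-1\}$, and $b_k\sim j$ for all $j\in\{2k,\ldots,3k-2\}$; (iv) $b_i\sim k+i-1$ for $1\leq i\leq k$, and $b_0\sim 0$. ($G$ is $2k$-regular of order $6k$.) Let $X=V(A)\cup V(H)$. The graph $G'$ is obtained from $G$ by Godsil–McKay switching with respect to $X$: for every vertex $y\in V(B)\cup V(C)$ (each such $y$ has exactly $|X|/2$ neighbors in $X$), delete all edges between $y$ and $X$ and join $y$ instead to the $|X|/2$ vertices of $X$ that were not adjacent to $y$ in $G$; all other edges are unchanged. The zero forcing number $Z(\cdot)$ is the minimum size of a set $S$ of vertices such that, if the vertices of $S$ are colored blue and all others white, repeated application of the rule "a blue vertex with exactly one white neighbor forces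 that neighbor to become blue" eventually makes every vertex blue. *)

theory Defs
  imports Main
begin

definition force_step :: "'a set \<Rightarrow> ('a \<Rightarrow> 'a \<Rightarrow> bool) \<Rightarrow> 'a set \<Rightarrow> 'a set \<Rightarrow> bool" where
  "force_step V E Bl Bl' \<longleftrightarrow>
     (\<exists>u\<in>Bl. \<exists>w\<in>V - Bl. E u w \<and> (\<forall>x\<in>V. E u x \<and> x \<noteq> w \<longrightarrow> x \<in> Bl) \<and> Bl' = insert w Bl)"

definition zero_forcing_set :: "'a set \<Rightarrow> ('a \<Rightarrow> 'a \<Rightarrow> bool) \<Rightarrow> 'a set \<Rightarrow> bool" where
  "zero_forcing_set V E S \<longleftrightarrow> S \<subseteq> V \<and> (force_step V E)\<^sup>*\<^sup>* S V"

definition zero_forcing_number :: "'a set \<Rightarrow> ('a \<Rightarrow> 'a \<Rightarrow> bool) \<Rightarrow> nat" where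
  "zero_forcing_number V E = (LEAST n. \<exists>S. zero_forcing_set V E S \<and> card S = n)"

definition gm_switch :: "'a set \<Rightarrow> ('a \<Rightarrow> 'a \<Rightarrow> bool) \<Rightarrow> 'a set \<Rightarrow> 'a \<Rightarrow> 'a \<Rightarrow> bool" where
  "gm_switch V E X u v \<longleftrightarrow> u \<in> V \<and> v \<in> V \<and>
     (if (u \<in> X \<and> v \<notin> X) \<or> (u \<notin> X \<and> v \<in> X) then \<not> E u v else E u v)"

datatype vtx = HV nat | AV nat | BV nat | CV nat

definition Gverts :: "nat \<Rightarrow> vtx set" where
  "Gverts k = HV ` {..<3*k-1} \<union> AV ` {..k} \<union> BV ` {..k} \<union> CV ` {1..k-1}"

text \<open>Generating (directed) edge list; the adjacency is its symmetric closure.\<close>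
fun gedge :: "nat \<Rightarrow> vtx \<Rightarrow> vtx \<Rightarrow> bool" where
  "gedge k (HV i) (HV j) = (i < 3*k-1 \<and> j < 3*k-1 \<and>
      (int j - int i) mod int (3*k-1) \<in> {int k..int (2*k-1)})"
| "gedge k (AV i) (AV j) = (i \<le> k \<and> j \<le> k \<and> i \<noteq> j)"
| "gedge k (AV i) (BV j) = (i \<le> k \<and> j \<le> k \<and> i \<noteq> j)"
| "gedge k (CV i) (HV j) = (1 \<le> i \<and> i \<le> k-1 \<and> (j = 0 \<or> (k \<le> j \<and> j \<le> 3*k-2)))"
| "gedge k (BV i) (HV j) =
     ((i \<le> k-1 \<and> 1 \<le> j \<and> j \<le> k-1)
    \<or> (i = k \<and> 2*k \<le> j \<and> j \<le> 3*k-2)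
    \<or> (1 \<le> i \<and> i \<le> k \<and> j = k+i-1)
    \<or> (i = 0 \<and> j = 0))"
| "gedge k _ _ = False"

definition G_adj :: "nat \<Rightarrow> vtx \<Rightarrow> vtx \<Rightarrow> bool" where
  "G_adj k u v \<longleftrightarrow> gedge k u v \<or> gedge k v u"

definition Xset :: "nat \<Rightarrow> vtx set" where
  "Xset k = AV ` {..k} \<union> HV ` {..<3*k-1}"

definition G'_adj :: "nat \<Rightarrow> vtx \<Rightarrow> vtx \<Rightarrow> bool" where
  "G'_adj k = gm_switch (Gverts k) (G_adj k) (Xset k)"

end

theory Submission
  imports Defs
begin

lemma force1:
  assumes "u \<in> Bl" "w \<in> V" "E u w" "\<forall>x. E u x \<longrightarrow> x = w \<or> x \<in> Bl"
  shows "(force_step V E)\<^sup>*\<^sup>* Bl (insert w Bl)"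
proof (cases "w \<in> Bl")
  case True then show ?thesis by (simp add: insert_absorb)
next
  case False
  have "force_step V E Bl (insert w Bl)"
    unfolding force_step_def using assms False by blast
  then show ?thesis by blast
qed

lemma chain:
  assumes "\<And>t. t < m \<Longrightarrow> (force_step V E)\<^sup>*\<^sup>* (F t) (F (Suc t))"
  shows "(force_step V E)\<^sup>*\<^sup>* (F 0) (F m)"
  using assms
proof (induction m)
  case 0 then show ?case by simp
next
  case (Suc m)
  then show ?case by (meson less_Suc_eq rtranclp_trans)
qed

lemma hh: "gedge k (HV i) (HV j) \<longleftrightarrow> i < 3*k-1 \<and> j < 3*k-1 \<and>
   ((i + k \<le> j \<and> j + 1 \<le> i + 2*k) \<or> (j + k \<le> i \<and> i + 1 \<le> j + 2*k))"
proof (cases "i < 3*k-1 \<and> j < 3*k-1")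
  case True
  define n where "n = int (3*k-1)"
  have n: "n = 3 * int k - 1" using True unfolding n_def by auto
  show ?thesis
  proof (cases "i \<le> j")
    case True
    have "(int j - int i) mod n = int j - int i"
      using \<open>i < 3*k-1 \<and> j < 3*k-1\<close> True n by (intro mod_pos_pos_trivial) auto
    then show ?thesis using \<open>i < 3*k-1 \<and> j < 3*k-1\<close> True unfolding n_def[symmetric] by auto
  next
    case False
    have "(int j - int i) mod n = (int j - int i + n) mod n" by simp
    also have "\<dots> = int j - int i + n"
      using \<open>i < 3*k-1 \<and> j < 3*k-1\<close> False n by (intro mod_pos_pos_trivial) auto
    finally show ?thesis using \<open>i < 3*k-1 \<and> j < 3*k-1\<close> False n unfolding n_def[symmetric] by auto
  qed
qed auto

declare gedge.simps(1)[simp del]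
declare hh[simp]

lemma img_simps[simp]:
  "HV i \<in> HV ` A \<longleftrightarrow> i \<in> A" "AV i \<in> AV ` A \<longleftrightarrow> i \<in> A"
  "BV i \<in> BV ` A \<longleftrightarrow> i \<in> A" "CV i \<in> CV ` A \<longleftrightarrow> i \<in> A"
  "HV i \<notin> AV ` A" "HV i \<notin> BV ` A" "HV i \<notin> CV ` A"
  "AV i \<notin> HV ` A" "AV i \<notin> BV ` A" "AV i \<notin> CV ` A"
  "BV i \<notin> AV ` A" "BV i \<notin> HV ` A" "BV i \<notin> CV ` A"
  "CV i \<notin> AV ` A" "CV i \<notin> BV ` A" "CV i \<notin> HV ` A"
  by auto

lemma Gverts_mem:
  "HV i \<in> Gverts k \<longleftrightarrow> i < 3*k-1" "AV i \<in> Gverts k \<longleftrightarrow> i \<le> k"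
  "BV i \<in> Gverts k \<longleftrightarrow> i \<le> k" "CV i \<in> Gverts k \<longleftrightarrow> 1 \<le> i \<and> i \<le> k-1"
  by (auto simp: Gverts_def)

lemma Xset_mem:
  "HV i \<in> Xset k \<longleftrightarrow> i < 3*k-1" "AV i \<in> Xset k \<longleftrightarrow> i \<le> k"
  "BV i \<notin> Xset k" "CV i \<notin> Xset k"
  by (auto simp: Xset_def)

lemma vcases: "(\<And>i. P (HV i)) \<Longrightarrow> (\<And>i. P (AV i)) \<Longrightarrow> (\<And>i. P (BV i)) \<Longrightarrow> (\<And>i. P (CV i)) \<Longrightarrow> \<forall>x. P x"
  by (metis vtx.exhaust)

lemma partG:
  assumes k: "k \<ge> 2"
  shows "zero_forcing_number (Gverts k) (G_adj k) \<le> 4*k-2"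
proof -
  let ?fs = "force_step (Gverts k) (G_adj k)"
  define S0 where "S0 = HV`{k-1..3*k-2} \<union> CV`{1..k-1} \<union> AV`{2..k}"
  have cardS0: "card S0 = 4*k-2"
  proof -
    have "card (HV`{k-1..3*k-2}) = 2*k" using k by (simp add: card_image inj_on_def)
    moreover have "card (CV`{1..k-1}) = k-1" by (simp add: card_image inj_on_def)
    moreover have "card (AV`{2..k}) = k-1" by (simp add: card_image inj_on_def)
    ultimately show ?thesis unfolding S0_def using k
      by (subst card_Un_disjoint, auto, subst card_Un_disjoint, auto)
  qed
  have S0V: "S0 \<subseteq> Gverts k" unfolding S0_def using k by (auto simp: Gverts_def)
  define S1 where "S1 = insert (BV k) S0"
  have st1: "?fs\<^sup>*\<^sup>* S0 S1" unfolding S1_def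
    apply (rule force1[where u="HV (3*k-2)"])
    using k apply (auto simp: S0_def Gverts_mem G_adj_def hh)[3]
    apply (rule vcases)
    using k by (auto simp: S0_def Gverts_mem G_adj_def hh)
  define S2 where "S2 = insert (HV 0) S1"
  have st2: "?fs\<^sup>*\<^sup>* S1 S2" unfolding S2_def
    apply (rule force1[where u="CV 1"])
    using k apply (auto simp: S1_def S0_def Gverts_mem G_adj_def)[3]
    apply (rule vcases)
    using k by (auto simp: S1_def S0_def Gverts_mem G_adj_def)
  define F where "F t = S2 \<union> HV`{k-1-t..<k-1}" for t
  have st3: "?fs\<^sup>*\<^sup>* (F 0) (F (k-2))"
  proof (rule chain)
    fix t assume t: "t < k-2"
    have e: "F (Suc t) = insert (HV (k-2-t)) (F t)"
      unfolding F_def using t by auto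
    show "?fs\<^sup>*\<^sup>* (F t) (F (Suc t))" unfolding e
      apply (rule force1[where u="HV (3*k-3-t)"])
      using k t apply (auto simp: F_def S2_def S1_def S0_def Gverts_mem G_adj_def)[3]
      apply (rule vcases)
      using k t by (auto simp: F_def S2_def S1_def S0_def Gverts_mem G_adj_def)
  qed
  define S3 where "S3 = S2 \<union> HV`{1..<k-1}"
  have F0: "F 0 = S2" unfolding F_def by simp
  have Fk: "F (k-2) = S3" unfolding F_def S3_def using k by (simp add: numeral_2_eq_2 Suc_diff_Suc)
  define F' where "F' t = S3 \<union> BV`{1..t}" for t
  have st4: "?fs\<^sup>*\<^sup>* (F' 0) (F' (k-1))"
  proof (rule chain)
    fix t assume t: "t < k-1"
    have e: "F' (Suc t) = insert (BV (Suc t)) (F' t)"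
      unfolding F'_def using t by auto
    show "?fs\<^sup>*\<^sup>* (F' t) (F' (Suc t))" unfolding e
      apply (rule force1[where u="HV (k+t)"])
      using k t apply (auto simp: F'_def S3_def S2_def S1_def S0_def Gverts_mem G_adj_def)[3]
      apply (rule vcases)
      using k t by (auto simp: F'_def S3_def S2_def S1_def S0_def Gverts_mem G_adj_def)
  qed
  have F'0: "F' 0 = S3" unfolding F'_def by simp
  define S4 where "S4 = S3 \<union> BV`{1..k-1}"
  have F'k: "F' (k-1) = S4" unfolding F'_def S4_def by simp
  define S5 where "S5 = insert (BV 0) S4"
  have st5: "?fs\<^sup>*\<^sup>* S4 S5" unfolding S5_def
    apply (rule force1[where u="HV 0"])
    using k apply (auto simp: S4_def S3_def S2_def S1_def S0_def Gverts_mem G_adj_def)[3]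
    apply (rule vcases)
    using k by (auto simp: S4_def S3_def S2_def S1_def S0_def Gverts_mem G_adj_def)
  define S6 where "S6 = insert (AV 1) S5"
  have st6: "?fs\<^sup>*\<^sup>* S5 S6" unfolding S6_def
    apply (rule force1[where u="BV 0"])
    using k apply (auto simp: S5_def S4_def S3_def S2_def S1_def S0_def Gverts_mem G_adj_def)[3]
    apply (rule vcases)
    using k by (auto simp: S5_def S4_def S3_def S2_def S1_def S0_def Gverts_mem G_adj_def)
  define S7 where "S7 = insert (AV 0) S6"
  have st7: "?fs\<^sup>*\<^sup>* S6 S7" unfolding S7_def
    apply (rule force1[where u="BV 1"])
    using k apply (auto simp: S6_def S5_def S4_def S3_def S2_def S1_def S0_def Gverts_mem G_adj_def)[3]
    apply (rule vcases)
    using k by (auto simp: S6_def S5_def S4_def S3_def S2_def S1_def S0_def Gverts_mem G_adj_def)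
  have S7V: "S7 = Gverts k"
  proof (rule set_eqI)
    fix x show "x \<in> S7 \<longleftrightarrow> x \<in> Gverts k"
      by (cases x) (use k in \<open>auto simp: S7_def S6_def S5_def S4_def S3_def S2_def S1_def S0_def Gverts_mem\<close>)
  qed
  have "?fs\<^sup>*\<^sup>* S0 (Gverts k)"
    using st1 st2 st3 st4 st5 st6 st7 F0 Fk F'0 F'k S7V
    by (metis rtranclp_trans)
  then have "zero_forcing_set (Gverts k) (G_adj k) S0"
    unfolding zero_forcing_set_def using S0V by simp
  then show ?thesis unfolding zero_forcing_number_def using cardS0
    by (metis (mono_tags, lifting) Least_le)
qed

lemma partG':
  assumes k: "k \<ge> 2"
  shows "zero_forcing_number (Gverts k) (G'_adj k) \<le> 4*k-3"
proof -
  let ?fs = "force_step (Gverts k) (G'_adj k)"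
  define T0 where "T0 = HV`{..<2*k-2} \<union> CV`{1..k-1} \<union> AV`{1..k}"
  have cardT0: "card T0 = 4*k-3"
  proof -
    have "card (HV`{..<2*k-2}) = 2*k-2" by (simp add: card_image inj_on_def)
    moreover have "card (CV`{1..k-1}) = k-1" by (simp add: card_image inj_on_def)
    moreover have "card (AV`{1..k}) = k" by (simp add: card_image inj_on_def)
    ultimately show ?thesis unfolding T0_def using k
      by (subst card_Un_disjoint, auto, subst card_Un_disjoint, auto)
  qed
  have T0V: "T0 \<subseteq> Gverts k" unfolding T0_def using k by (auto simp: Gverts_def)
  define T1 where "T1 = insert (AV 0) T0"
  have st1: "?fs\<^sup>*\<^sup>* T0 T1" unfolding T1_def
    apply (rule force1[where u="CV 1"])
    using k apply (auto simp: T0_def Gverts_mem Xset_mem G'_adj_def gm_switch_def G_adj_def)[3]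
    apply (rule vcases)
    using k by (auto simp: T0_def Gverts_mem Xset_mem G'_adj_def gm_switch_def G_adj_def)
  define F where "F t = T1 \<union> BV`{..<t}" for t
  have st2: "?fs\<^sup>*\<^sup>* (F 0) (F (k+1))"
  proof (rule chain)
    fix t assume t: "t < k+1"
    have e: "F (Suc t) = insert (BV t) (F t)"
      unfolding F_def using t by auto
    show "?fs\<^sup>*\<^sup>* (F t) (F (Suc t))" unfolding e
      apply (rule force1[where u="AV t"])
      using k t apply (auto simp: F_def T1_def T0_def Gverts_mem Xset_mem G'_adj_def gm_switch_def G_adj_def)[3]
      apply (rule vcases)
      using k t by (auto simp: F_def T1_def T0_def Gverts_mem Xset_mem G'_adj_def gm_switch_def G_adj_def)
  qed
  have F0: "F 0 = T1" unfolding F_def by simp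
  define T2 where "T2 = T1 \<union> BV`{..<k+1}"
  have Fk: "F (k+1) = T2" unfolding F_def T2_def by simp
  define T3 where "T3 = insert (HV (2*k-2)) T2"
  have st3: "?fs\<^sup>*\<^sup>* T2 T3" unfolding T3_def
    apply (rule force1[where u="BV k"])
    using k apply (auto simp: T2_def T1_def T0_def Gverts_mem Xset_mem G'_adj_def gm_switch_def G_adj_def)[3]
    apply (rule vcases)
    using k by (auto simp: T2_def T1_def T0_def Gverts_mem Xset_mem G'_adj_def gm_switch_def G_adj_def)
  define F' where "F' t = T3 \<union> HV`{2*k-1..<2*k-1+t}" for t
  have st4: "?fs\<^sup>*\<^sup>* (F' 0) (F' k)"
  proof (rule chain)
    fix t assume t: "t < k"
    have e: "F' (Suc t) = insert (HV (2*k-1+t)) (F' t)"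
      unfolding F'_def using t by auto
    show "?fs\<^sup>*\<^sup>* (F' t) (F' (Suc t))" unfolding e
      apply (rule force1[where u="HV t"])
      using k t apply (auto simp: F'_def T3_def T2_def T1_def T0_def Gverts_mem Xset_mem G'_adj_def gm_switch_def G_adj_def)[3]
      apply (rule vcases)
      using k t by (auto simp: F'_def T3_def T2_def T1_def T0_def Gverts_mem Xset_mem G'_adj_def gm_switch_def G_adj_def)
  qed
  have F'0: "F' 0 = T3" unfolding F'_def by simp
  have TV: "F' k = Gverts k"
  proof (rule set_eqI)
    fix x show "x \<in> F' k \<longleftrightarrow> x \<in> Gverts k"
      by (cases x) (use k in \<open>auto simp: F'_def T3_def T2_def T1_def T0_def Gverts_mem\<close>)
  qed
  have "?fs\<^sup>*\<^sup>* T0 (Gverts k)"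
    using st1 st2 st3 st4 F0 Fk F'0 TV
    by (metis rtranclp_trans)
  then have "zero_forcing_set (Gverts k) (G'_adj k) T0"
    unfolding zero_forcing_set_def using T0V by simp
  then show ?thesis unfolding zero_forcing_number_def using cardT0
    by (metis (mono_tags, lifting) Least_le)
qed

theorem lemma5p7:
  fixes k :: nat
  assumes "k \<ge> 2"
  shows "zero_forcing_number (Gverts k) (G_adj k) \<le> 4*k-2 \<and>
         zero_forcing_number (Gverts k) (G'_adj k) \<le> 4*k-3"
  using partG[OF assms] partG'[OF assms] by simp

end
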